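(* Let $G=(V,E)$ be a connected undirected graph (finite or infinite). Then $G$ has no multiplex $M$ such that both $\widetilde M\neq V$ and $\widetilde M$ is maximal for inclusion in the family $\{\widetilde N: N \text{ a multiplex of } G\}$.
   Context: A graph $G=(V,E)$ has vertex set $V$ and edge set $E\subseteq V^2$; it is undirected if $E$ is irreflexive and symmetric. Implication classes: on $E$ define $(a,b)\Gamma(a',b')$ iff either $a=a'$ and $(b,b')\notin E$, or $b=b'$ and $(a,a')\notin E$; the classes of the transitive closure $\Gamma^*$ are the implication classes. For an implication class $A$, $A^{-1}=\{(b,a):(a,b)\in A\}$ and the color class is $\widehat A=A\cup A^{-1}$. A simplex of rank $r\ge1$ is a complete sub-graph $S=(V_S,E_S)$ of $G$ on $r+1$ vertices whose distinct undirected edges lie in distinct color classes. A multiplex is a set of edges $M(S)=\bigcup\{\widehat A:\widehat A\text{ a color class},\ \widehat A\cap E_S\neq\emptyset\}$ for a simplex $S$; $\widetilde N$ denotes the set of vertices spanned by a multiplex $N$. *)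

theory Defs
  imports Main
begin

definition undirected_graph :: "'a set \<Rightarrow> ('a \<times> 'a) set \<Rightarrow> bool" where
  "undirected_graph V E \<longleftrightarrow> E \<subseteq> V \<times> V \<and> irrefl E \<and> sym E"

definition connected_graph :: "'a set \<Rightarrow> ('a \<times> 'a) set \<Rightarrow> bool" where
  "connected_graph V E \<longleftrightarrow> (\<forall>u\<in>V. \<forall>v\<in>V. (u, v) \<in> E\<^sup>*)"

definition Gamma :: "('a \<times> 'a) set \<Rightarrow> (('a \<times> 'a) \<times> ('a \<times> 'a)) set" where
  "Gamma E = {((a, b), (a', b')). (a, b) \<in> E \<and> (a', b') \<in> E \<and>
      ((a = a' \<and> (b, b') \<notin> E) \<or> (b = b' \<and> (a, a') \<notin> E))}"

definition implication_classes :: "('a \<times> 'a) set \<Rightarrow> ('a \<times> 'a) set set" where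
  "implication_classes E = {(Gamma E)\<^sup>+ `` {e} | e. e \<in> E}"

definition color_classes :: "('a \<times> 'a) set \<Rightarrow> ('a \<times> 'a) set set" where
  "color_classes E = {A \<union> A\<inverse> | A. A \<in> implication_classes E}"

definition sub_edges :: "'a set \<Rightarrow> ('a \<times> 'a) set" where
  "sub_edges S = {(x, y). x \<in> S \<and> y \<in> S \<and> x \<noteq> y}"

definition is_simplex :: "'a set \<Rightarrow> ('a \<times> 'a) set \<Rightarrow> 'a set \<Rightarrow> nat \<Rightarrow> bool" where
  "is_simplex V E S r \<longleftrightarrow> r \<ge> 1 \<and> S \<subseteq> V \<and> finite S \<and> card S = r + 1 \<and>
     sub_edges S \<subseteq> E \<and>
     (\<forall>x y u v C. (x, y) \<in> sub_edges S \<and> (u, v) \<in> sub_edges S \<and>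
        {x, y} \<noteq> {u, v} \<and> C \<in> color_classes E \<and> (x, y) \<in> C \<longrightarrow> (u, v) \<notin> C)"

definition multiplex_of :: "('a \<times> 'a) set \<Rightarrow> 'a set \<Rightarrow> ('a \<times> 'a) set" where
  "multiplex_of E S = \<Union>{C \<in> color_classes E. C \<inter> sub_edges S \<noteq> {}}"

definition is_multiplex :: "'a set \<Rightarrow> ('a \<times> 'a) set \<Rightarrow> ('a \<times> 'a) set \<Rightarrow> bool" where
  "is_multiplex V E M \<longleftrightarrow> (\<exists>S r. is_simplex V E S r \<and> M = multiplex_of E S)"

definition spanned :: "('a \<times> 'a) set \<Rightarrow> 'a set" where
  "spanned N = Field N"

end

theory Submission
  imports Defs
begin

lemma Gamma_sub: "Gamma E \<subseteq> E \<times> E"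
  by (auto simp: Gamma_def)

lemma Gamma_sym: "sym E \<Longrightarrow> sym (Gamma E)"
  unfolding sym_def Gamma_def by auto

lemma Gamma_refl: "irrefl E \<Longrightarrow> (a, b) \<in> E \<Longrightarrow> ((a, b), (a, b)) \<in> Gamma E"
  unfolding irrefl_def Gamma_def by auto

lemma Gamma_flip: "sym E \<Longrightarrow> ((a, b), (c, d)) \<in> Gamma E \<Longrightarrow> ((b, a), (d, c)) \<in> Gamma E"
  unfolding sym_def Gamma_def by auto

lemma Gamma_trancl_flip:
  assumes "sym E" "(e, f) \<in> (Gamma E)\<^sup>+"
  shows "((snd e, fst e), (snd f, fst f)) \<in> (Gamma E)\<^sup>+"
  using assms(2)
proof (induction rule: trancl_induct)
  case (base y)
  then show ?case using Gamma_flip[OF assms(1), of "fst e" "snd e" "fst y" "snd y"] by auto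
next
  case (step y z)
  then show ?case using Gamma_flip[OF assms(1), of "fst y" "snd y" "fst z" "snd z"]
    by (metis trancl.trancl_into_trancl prod.collapse)
qed

lemma Gamma_trancl_sym: "sym E \<Longrightarrow> (e, f) \<in> (Gamma E)\<^sup>+ \<Longrightarrow> (f, e) \<in> (Gamma E)\<^sup>+"
  using Gamma_sym sym_trancl by (metis symD)

lemma Gamma_rtrancl_sym: "sym E \<Longrightarrow> (e, f) \<in> (Gamma E)\<^sup>* \<Longrightarrow> (f, e) \<in> (Gamma E)\<^sup>*"
  by (metis Gamma_trancl_sym rtrancl_eq_or_trancl)

lemma Gamma_trancl_E: "(e, f) \<in> (Gamma E)\<^sup>+ \<Longrightarrow> e \<in> E \<and> f \<in> E"
proof (induction rule: trancl_induct)
  case (base y) then show ?case using Gamma_sub by blast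
next
  case (step y z) then show ?case using Gamma_sub by blast
qed

lemma Gamma_rt_t: "irrefl E \<Longrightarrow> e \<in> E \<Longrightarrow> (e, f) \<in> (Gamma E)\<^sup>* \<Longrightarrow> (e, f) \<in> (Gamma E)\<^sup>+"
  by (metis Gamma_refl prod.collapse r_into_trancl' rtrancl_eq_or_trancl)

definition col :: "('a \<times> 'a) set \<Rightarrow> 'a \<times> 'a \<Rightarrow> ('a \<times> 'a) set" where
  "col E e = (Gamma E)\<^sup>+ `` {e} \<union> ((Gamma E)\<^sup>+ `` {e})\<inverse>"

lemma col_in: "irrefl E \<Longrightarrow> e \<in> E \<Longrightarrow> e \<in> col E e"
  unfolding col_def using Gamma_refl[of E "fst e" "snd e"] by auto

lemma col_color: "e \<in> E \<Longrightarrow> col E e \<in> color_classes E"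
  unfolding col_def color_classes_def implication_classes_def by blast

lemma cls_eq:
  assumes "sym E" "(d, e) \<in> (Gamma E)\<^sup>+"
  shows "(Gamma E)\<^sup>+ `` {d} = (Gamma E)\<^sup>+ `` {e}"
proof -
  have "(e, d) \<in> (Gamma E)\<^sup>+" using Gamma_trancl_sym assms by blast
  then show ?thesis using assms by (auto intro: trancl_trans)
qed

lemma cls_flip:
  assumes "sym E"
  shows "(Gamma E)\<^sup>+ `` {(y, x)} = ((Gamma E)\<^sup>+ `` {(x, y)})\<inverse>"
proof -
  have "((x, y), (b, a)) \<in> (Gamma E)\<^sup>+" if "((y, x), (a, b)) \<in> (Gamma E)\<^sup>+" for a b
    using Gamma_trancl_flip[OF assms that] by simp
  moreover have "((y, x), (b, a)) \<in> (Gamma E)\<^sup>+" if "((x, y), (a, b)) \<in> (Gamma E)\<^sup>+" for a b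
    using Gamma_trancl_flip[OF assms that] by simp
  ultimately show ?thesis by auto
qed

lemma color_eq_col:
  assumes "sym E" "C \<in> color_classes E" "e \<in> C"
  shows "C = col E e"
proof -
  obtain d where C: "C = (Gamma E)\<^sup>+ `` {d} \<union> ((Gamma E)\<^sup>+ `` {d})\<inverse>"
    using assms(2) unfolding color_classes_def implication_classes_def by blast
  obtain x y where e: "e = (x, y)" by fastforce
  show ?thesis
  proof (cases "e \<in> (Gamma E)\<^sup>+ `` {d}")
    case True
    then show ?thesis using cls_eq[OF assms(1), of d e] C unfolding col_def by auto
  next
    case False
    then have "(y, x) \<in> (Gamma E)\<^sup>+ `` {d}" using assms(3) C e by auto
    then have "(Gamma E)\<^sup>+ `` {d} = ((Gamma E)\<^sup>+ `` {e})\<inverse>"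
      using cls_eq[OF assms(1), of d "(y,x)"] cls_flip[OF assms(1), of y x] e by auto
    then show ?thesis using C unfolding col_def by auto
  qed
qed

lemma color_sym: "C \<in> color_classes E \<Longrightarrow> (x, y) \<in> C \<Longrightarrow> (y, x) \<in> C"
  unfolding color_classes_def by auto

lemma color_sub: "sym E \<Longrightarrow> C \<in> color_classes E \<Longrightarrow> C \<subseteq> E"
  unfolding color_classes_def implication_classes_def
  by (auto dest: Gamma_trancl_E symD)

lemma crossing:
  assumes "(u, v) \<in> E\<^sup>*" "u \<in> F" "v \<notin> F"
  shows "\<exists>p q. (p, q) \<in> E \<and> p \<in> F \<and> q \<notin> F"
  using assms by (induction rule: rtrancl_induct) auto


theorem lemma4p9:
  fixes V :: "'a set" and E :: "('a \<times> 'a) set"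
  assumes "undirected_graph V E"
    and "connected_graph V E"
  shows "\<not> (\<exists>M. is_multiplex V E M \<and> spanned M \<noteq> V \<and>
              (\<forall>N. is_multiplex V E N \<and> spanned M \<subseteq> spanned N \<longrightarrow> spanned N = spanned M))"
proof
  assume "\<exists>M. is_multiplex V E M \<and> spanned M \<noteq> V \<and>
              (\<forall>N. is_multiplex V E N \<and> spanned M \<subseteq> spanned N \<longrightarrow> spanned N = spanned M)"
  then obtain M where mult: "is_multiplex V E M" and ne: "spanned M \<noteq> V"
    and max: "\<And>N. is_multiplex V E N \<Longrightarrow> spanned M \<subseteq> spanned N \<Longrightarrow> spanned N = spanned M"
    by blast
  have EV: "E \<subseteq> V \<times> V" and irr: "irrefl E" and sy: "sym E"
    using assms(1) unfolding undirected_graph_def by auto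
  obtain S r where simp: "is_simplex V E S r" and Mdef: "M = multiplex_of E S"
    using mult unfolding is_multiplex_def by blast
  have SE: "sub_edges S \<subseteq> E" and finS: "finite S" and cardS: "card S = r + 1"
    and r1: "r \<ge> 1" and SV: "S \<subseteq> V"
    and Sdist: "\<And>x y u v C. (x, y) \<in> sub_edges S \<Longrightarrow> (u, v) \<in> sub_edges S \<Longrightarrow>
        {x, y} \<noteq> {u, v} \<Longrightarrow> C \<in> color_classes E \<Longrightarrow> (x, y) \<in> C \<Longrightarrow> (u, v) \<notin> C"
    using simp unfolding is_simplex_def by (simp, simp, simp, simp, simp, meson)
  have Sp: "\<exists>t\<in>S. t \<noteq> s" if "s \<in> S" for s
  proof (rule ccontr)
    assume "\<not> ?thesis"
    then have "S \<subseteq> {s}" by blast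
    then have "card S \<le> card {s}" by (intro card_mono) simp_all
    then show False using cardS r1 by simp
  qed
  have Mcol: "(x, y) \<in> M \<longleftrightarrow> (\<exists>C\<in>color_classes E. C \<inter> sub_edges S \<noteq> {} \<and> (x, y) \<in> C)" for x y
    unfolding Mdef multiplex_of_def by blast
  have subM: "sub_edges S \<subseteq> M"
  proof
    fix e assume e: "e \<in> sub_edges S"
    then have "e \<in> E" using SE by blast
    then show "e \<in> M" using e col_in[OF irr] col_color unfolding Mdef multiplex_of_def by blast
  qed
  have ME: "M \<subseteq> E" using color_sub[OF sy] unfolding Mdef multiplex_of_def by blast
  have Msym: "(y, x) \<in> M" if "(x, y) \<in> M" for x y
    using that Mcol color_sym by metis
  have SF: "S \<subseteq> Field M"
  proof
    fix s assume "s \<in> S"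
    then obtain t where "t \<in> S" "t \<noteq> s" using Sp by blast
    then have "(s, t) \<in> M" using subM \<open>s \<in> S\<close> unfolding sub_edges_def by blast
    then show "s \<in> Field M" by (auto simp: Field_def)
  qed
  have FV: "Field M \<subseteq> V" using ME EV by (auto simp: Field_def)
  obtain v where v: "v \<in> V" "v \<notin> Field M" using ne FV unfolding spanned_def by blast
  obtain s0 where s0: "s0 \<in> S"
    using cardS by (metis card.empty add_is_0 ex_in_conv one_neq_zero)
  have "(s0, v) \<in> E\<^sup>*" using assms(2) s0 SV v unfolding connected_graph_def by blast
  then obtain u w where uw: "(u, w) \<in> E" "u \<in> Field M" "w \<notin> Field M"
    using crossing[of s0 v E "Field M"] s0 SF v by blast
  have wV: "w \<in> V" using uw EV by blast
  have Mclosed: "f \<in> M" if eM: "e \<in> M" and ef: "(e, f) \<in> Gamma E" for e f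
  proof -
    obtain C where C: "C \<in> color_classes E" "C \<inter> sub_edges S \<noteq> {}" "e \<in> C"
      using eM unfolding Mdef multiplex_of_def by blast
    have Ce: "C = col E e" using color_eq_col[OF sy C(1,3)] .
    have "(e, f) \<in> (Gamma E)\<^sup>+" using ef by blast
    then have "f \<in> col E e" unfolding col_def by blast
    then have "f \<in> C" using Ce by simp
    then show ?thesis using C unfolding Mdef multiplex_of_def by blast
  qed
  have L0: "(w, y) \<in> E" if "(x, y) \<in> M" "(w, x) \<in> E" for x y
  proof (rule ccontr)
    assume nE: "(w, y) \<notin> E"
    have "(x, w) \<in> E" using that(2) sy by (meson symD)
    moreover have "(x, y) \<in> E" using that(1) ME by blast
    ultimately have "((x, y), (x, w)) \<in> Gamma E" using nE sy unfolding Gamma_def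
      by (auto dest: symD)
    then have "(x, w) \<in> M" using Mclosed that(1) by blast
    then show False using uw(3) by (auto simp: Field_def)
  qed
  have toS: "\<exists>a b. (a, b) \<in> sub_edges S \<and> ((a, b), (x, y)) \<in> (Gamma E)\<^sup>*" if xyM: "(x, y) \<in> M" for x y
  proof -
    obtain C where C: "C \<in> color_classes E" "C \<inter> sub_edges S \<noteq> {}" "(x, y) \<in> C"
      using xyM unfolding Mdef multiplex_of_def by blast
    obtain p q where pq: "(p, q) \<in> C" "(p, q) \<in> sub_edges S" using C(2) by auto
    have "C = col E (x, y)" using color_eq_col[OF sy C(1,3)] .
    then have "((x, y), (p, q)) \<in> (Gamma E)\<^sup>+ \<or> ((x, y), (q, p)) \<in> (Gamma E)\<^sup>+"
      using pq(1) unfolding col_def by auto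
    moreover have "(q, p) \<in> sub_edges S" using pq(2) unfolding sub_edges_def by auto
    ultimately show ?thesis using pq(2) Gamma_trancl_sym[OF sy] by (meson trancl_into_rtrancl)
  qed
  have adjS: "(w, q) \<in> E" if "q \<in> S" for q
  proof -
    obtain y where uy: "(u, y) \<in> M" using uw(2) Msym unfolding Field_def by blast
    obtain a b where ab: "(a, b) \<in> sub_edges S" "((a, b), (u, y)) \<in> (Gamma E)\<^sup>*"
      using toS[OF uy] by blast
    have "((u, y), (a, b)) \<in> (Gamma E)\<^sup>*" using Gamma_rtrancl_sym[OF sy ab(2)] .
    moreover have "(u, y) \<in> M \<and> (w, fst (u, y)) \<in> E" using uy uw(1) sy by (auto dest: symD)
    ultimately have "(a, b) \<in> M \<and> (w, fst (a, b)) \<in> E"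
    proof (induction rule: rtrancl_induct)
      case base then show ?case by simp
    next
      case (step f g)
      obtain x1 y1 where f: "f = (x1, y1)" by fastforce
      obtain x2 y2 where g: "g = (x2, y2)" by fastforce
      have gM: "g \<in> M" using step Mclosed by blast
      have "x1 = x2 \<or> y1 = y2" using step(2) f g unfolding Gamma_def by auto
      moreover have "(w, y1) \<in> E" using L0 step f by auto
      moreover have "(w, x1) \<in> E" using step f by auto
      moreover have "(x2, y2) \<in> M" using gM g by simp
      ultimately have "(w, x2) \<in> E" using L0 Msym by metis
      then show ?case using gM g by simp
    qed
    then have wa: "(w, a) \<in> E" by simp
    show ?thesis
    proof (cases "q = a")
      case True then show ?thesis using wa by simp
    next
      case False
      then have "(a, q) \<in> M" using subM ab(1) that unfolding sub_edges_def by auto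
      then show ?thesis using L0 wa by blast
    qed
  qed
  have key: "(w, x) \<in> E \<and> (\<exists>c\<in>S. ((w, c), (w, x)) \<in> (Gamma E)\<^sup>*)" if xF: "x \<in> Field M" for x
  proof -
    obtain y where xy: "(x, y) \<in> M" using xF Msym unfolding Field_def by blast
    obtain a b where ab: "(a, b) \<in> sub_edges S" "((a, b), (x, y)) \<in> (Gamma E)\<^sup>*"
      using toS[OF xy] by blast
    have "(x, y) \<in> M \<and> (w, fst (x, y)) \<in> E \<and> (\<exists>c\<in>S. ((w, c), (w, fst (x, y))) \<in> (Gamma E)\<^sup>*)
        \<and> (w, snd (x, y)) \<in> E \<and> (\<exists>c\<in>S. ((w, c), (w, snd (x, y))) \<in> (Gamma E)\<^sup>*)"
      using ab(2)
    proof (induction rule: rtrancl_induct)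
      case base
      have "a \<in> S" "b \<in> S" using ab(1) unfolding sub_edges_def by auto
      then show ?case using subM ab(1) adjS by auto
    next
      case (step f g)
      obtain x1 y1 where f: "f = (x1, y1)" by fastforce
      obtain x2 y2 where g: "g = (x2, y2)" by fastforce
      have gM: "g \<in> M" using step Mclosed by blast
      have IH: "(w, x1) \<in> E" "(w, y1) \<in> E" "\<exists>c\<in>S. ((w, c), (w, x1)) \<in> (Gamma E)\<^sup>*"
        "\<exists>c\<in>S. ((w, c), (w, y1)) \<in> (Gamma E)\<^sup>*" using step f by auto
      have "(x1 = x2 \<and> (y1, y2) \<notin> E) \<or> (y1 = y2 \<and> (x1, x2) \<notin> E)"
        using step(2) f g unfolding Gamma_def by auto
      then show ?case
      proof
        assume h: "x1 = x2 \<and> (y1, y2) \<notin> E"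
        have wy2: "(w, y2) \<in> E" using L0[of x2 y2] gM g h IH by auto
        have "((w, y1), (w, y2)) \<in> Gamma E" using IH wy2 h unfolding Gamma_def by auto
        then have "\<exists>c\<in>S. ((w, c), (w, y2)) \<in> (Gamma E)\<^sup>*" using IH(4)
          by (meson rtrancl.rtrancl_into_rtrancl)
        then show ?case using gM g h IH wy2 by auto
      next
        assume h: "y1 = y2 \<and> (x1, x2) \<notin> E"
        have "(y2, x2) \<in> M" using gM g Msym by simp
        then have wx2: "(w, x2) \<in> E" using L0[of y2 x2] h IH by auto
        have "((w, x1), (w, x2)) \<in> Gamma E" using IH wx2 h unfolding Gamma_def by auto
        then have "\<exists>c\<in>S. ((w, c), (w, x2)) \<in> (Gamma E)\<^sup>*" using IH(3)
          by (meson rtrancl.rtrancl_into_rtrancl)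
        then show ?case using gM g h IH wx2 by auto
      qed
    qed
    then show ?thesis by simp
  qed
  define cf where "cf s = col E (w, s)" for s
  define R where "R = (\<lambda>C. SOME s. s \<in> S \<and> cf s = C) ` (cf ` S)"
  have Rsome: "(SOME s. s \<in> S \<and> cf s = C) \<in> S \<and> cf (SOME s. s \<in> S \<and> cf s = C) = C"
    if "C \<in> cf ` S" for C
    using that by (smt (verit, best) imageE someI_ex)
  have RS: "R \<subseteq> S" using Rsome unfolding R_def by blast
  have Rcov: "\<exists>r\<in>R. cf r = cf s" if "s \<in> S" for s
    using Rsome that unfolding R_def by blast
  have Rinj: "r = r'" if "r \<in> R" "r' \<in> R" "cf r = cf r'" for r r'
    using that Rsome unfolding R_def by (smt (verit) imageE)
  have finR: "finite R" using finS RS finite_subset by blast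
  have Rne: "R \<noteq> {}" using Rcov s0 by blast
  have wS: "w \<notin> S" using SF uw(3) by blast
  have wR: "w \<notin> R" using wS RS by blast
  define S' where "S' = insert w R"
  have cardS': "card S' = card R + 1" using finR wR unfolding S'_def by simp
  have cardR: "card R \<ge> 1" using finR Rne by (simp add: Suc_le_eq card_gt_0_iff)
  have subS': "sub_edges S' \<subseteq> E"
  proof
    fix e assume "e \<in> sub_edges S'"
    then obtain x y where e: "e = (x, y)" "x \<in> S'" "y \<in> S'" "x \<noteq> y"
      unfolding sub_edges_def by auto
    show "e \<in> E"
    proof (cases "x = w")
      case True then show ?thesis using e adjS RS unfolding S'_def by auto
    next
      case False
      show ?thesis
      proof (cases "y = w")
        case True then show ?thesis using e adjS RS False sy unfolding S'_def
          by (auto dest: symD)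
      next
        case False
        then have "e \<in> sub_edges S" using e \<open>x \<noteq> w\<close> RS unfolding S'_def sub_edges_def by auto
        then show ?thesis using SE by blast
      qed
    qed
  qed
  have colw: False if "C \<in> color_classes E" "C \<inter> sub_edges S \<noteq> {}" "(x, y) \<in> C" "x = w \<or> y = w" for C x y
  proof -
    have "(x, y) \<in> M" using that Mcol by blast
    then show False using that(4) uw(3) by (auto simp: Field_def)
  qed
  have dist': "(u', v') \<notin> C" if h: "(x, y) \<in> sub_edges S'" "(u', v') \<in> sub_edges S'"
    "{x, y} \<noteq> {u', v'}" "C \<in> color_classes E" "(x, y) \<in> C" for x y u' v' C
  proof
    assume uvC: "(u', v') \<in> C"
    have inS: "(a, b) \<in> sub_edges S" if "(a, b) \<in> sub_edges S'" "a \<noteq> w" "b \<noteq> w" for a b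
      using that RS unfolding S'_def sub_edges_def by auto
    show False
    proof (cases "x = w \<or> y = w")
      case xw: True
      show ?thesis
      proof (cases "u' = w \<or> v' = w")
        case True
        obtain r where r: "r \<in> R" "(w, r) \<in> C" "{x, y} = {w, r}"
          using xw h(1,5) color_sym[OF h(4)] unfolding S'_def sub_edges_def
          by (auto simp: insert_commute)
        obtain r' where r': "r' \<in> R" "(w, r') \<in> C" "{u', v'} = {w, r'}"
          using True h(2) uvC color_sym[OF h(4)] unfolding S'_def sub_edges_def
          by (auto simp: insert_commute)
        have "C = cf r" "C = cf r'" using color_eq_col[OF sy h(4)] r r' unfolding cf_def by auto
        then have "r = r'" using Rinj r r' by simp
        then show False using r r' h(3) by simp
      next
        case False
        then have "(u', v') \<in> sub_edges S" using inS h(2) by blast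
        then show False using colw[of C x y] h xw uvC by blast
      qed
    next
      case xnw: False
      then have "(x, y) \<in> sub_edges S" using inS h(1) by blast
      show ?thesis
      proof (cases "u' = w \<or> v' = w")
        case True
        then show False using colw[of C u' v'] h uvC \<open>(x, y) \<in> sub_edges S\<close> by blast
      next
        case False
        then have "(u', v') \<in> sub_edges S" using inS h(2) by blast
        then show False using Sdist[of x y u' v' C] h uvC \<open>(x, y) \<in> sub_edges S\<close> by blast
      qed
    qed
  qed
  have simp': "is_simplex V E S' (card R)"
  proof -
    have "S' \<subseteq> V" using wV RS SV unfolding S'_def by blast
    moreover have "finite S'" using finR unfolding S'_def by simp
    moreover have "\<forall>x y u v C. (x, y) \<in> sub_edges S' \<and> (u, v) \<in> sub_edges S' \<and>
        {x, y} \<noteq> {u, v} \<and> C \<in> color_classes E \<and> (x, y) \<in> C \<longrightarrow> (u, v) \<notin> C"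
      using dist' by blast
    ultimately show ?thesis unfolding is_simplex_def using cardR cardS' subS' by blast
  qed
  define N where "N = multiplex_of E S'"
  have multN: "is_multiplex V E N" using simp' unfolding N_def is_multiplex_def by blast
  have wN: "(w, r) \<in> N" if "r \<in> R" for r
  proof -
    have e: "(w, r) \<in> sub_edges S'" using that wR unfolding S'_def sub_edges_def by auto
    then have "(w, r) \<in> E" using subS' by blast
    then show ?thesis using e col_in[OF irr] col_color unfolding N_def multiplex_of_def by blast
  qed
  have FMN: "Field M \<subseteq> Field N"
  proof
    fix x assume "x \<in> Field M"
    then obtain c where c: "(w, x) \<in> E" "c \<in> S" "((w, c), (w, x)) \<in> (Gamma E)\<^sup>*" using key by blast
    obtain r where r: "r \<in> R" "cf r = cf c" using Rcov c(2) by blast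
    have wcE: "(w, c) \<in> E" using adjS c(2) by blast
    have "(w, x) \<in> col E (w, c)"
      using Gamma_rt_t[OF irr wcE c(3)] unfolding col_def by auto
    then have "(w, x) \<in> cf r" using r unfolding cf_def by simp
    moreover have "(w, r) \<in> cf r" "(w, r) \<in> sub_edges S'"
      using col_in[OF irr] subS' r(1) wR unfolding cf_def S'_def sub_edges_def by auto
    moreover have "cf r \<in> color_classes E" using col_color adjS r(1) RS
      unfolding cf_def by blast
    ultimately have "(w, x) \<in> N" unfolding N_def multiplex_of_def by blast
    then show "x \<in> Field N" by (auto simp: Field_def)
  qed
  have "spanned N = spanned M" using max[OF multN] FMN unfolding spanned_def by blast
  moreover obtain r where "r \<in> R" using Rne by blast
  then have "w \<in> Field N" using wN by (auto simp: Field_def)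
  ultimately show False using uw(3) unfolding spanned_def by blast
qed

end
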